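(* Consider the predator–prey system with predator-only harvesting $$\dot X=(1-Y)X,\qquad \dot Y=(X-U)Y,$$ on the open quadrant $\{(X,Y): X>0,\ Y>0\}$, under the feedback $U=Y$. Define $$V(X,Y)=\Psi(X)+\Psi(Y)+\Psi(1/X)+\Psi(Y/X)=\frac{(X-1)^2}{X}+Y-1-\ln Y+\frac{Y}{X}-1-\ln\!\Big(\frac{Y}{X}\Big).$$ Then $V$ is positive definite with respect to the equilibrium $(X,Y)=(1,1)$ (i.e. $V(1,1)=0$ and $V>0$ elsewhere on the quadrant), radially unbounded on the quadrant (i.e. $V(X,Y)\to\infty$ as $(X,Y)$ approaches the boundary $\{X=0\}\cup\{Y=0\}$ or as $X+Y\to\infty$), and along the closed-loop solutions $$\dot V=-\frac{(X-1)^2}{X}-(Y-1)^2,$$ which is negative definite on the quadrant. Hence $V$ is a strict Lyapunov function (strict CLF) for the closed loop on $\{X>0,Y>0\}$.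
   Context: $\Psi(S)=S-1-\ln S$ for $S>0$ (the Volterra Lyapunov building block); $\Psi(1)=0$ and $\Psi(S)>0$ for $S\neq1$. $X$ is the prey concentration, $Y$ the predator concentration, $U$ the harvesting rate. *)

theory Defs
  imports Complex_Main
begin

definition Psi :: "real \<Rightarrow> real" where
  "Psi S = S - 1 - ln S"

definition V :: "real \<Rightarrow> real \<Rightarrow> real" where
  "V X Y = Psi X + Psi Y + Psi (1 / X) + Psi (Y / X)"

end

theory Submission
  imports Defs
begin

lemma psi_nonneg: "S > 0 \<Longrightarrow> Psi S \<ge> 0" unfolding Psi_def using ln_le_minus_one[of S] by simp
lemma psi_pos: "S > 0 \<Longrightarrow> S \<noteq> 1 \<Longrightarrow> Psi S > 0" unfolding Psi_def using ln_diff_less[of S 1] by simp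
lemma V_alt: "X > 0 \<Longrightarrow> Y > 0 \<Longrightarrow> V X Y = (X - 1)^2 / X + Psi Y + Psi (Y/X)"
  unfolding V_def Psi_def by (simp add: ln_div field_simps power2_eq_square)
lemma V_ge: "X > 0 \<Longrightarrow> Y > 0 \<Longrightarrow> V X Y \<ge> (X - 1)^2 / X + Psi Y"
  using V_alt psi_nonneg[of "Y/X"] by simp
lemma xpart: "(X::real) > 0 \<Longrightarrow> (X - 1)^2 / X = X + 1/X - 2"
  by (simp add: field_simps power2_eq_square)
lemma psi_big: "(Y::real) > 0 \<Longrightarrow> Psi Y \<ge> Y/2 - 1"
proof -
  assume Y: "Y > 0"
  have "ln (Y/2) \<le> Y/2 - 1" using ln_le_minus_one[of "Y/2"] Y by simp
  moreover have "ln (Y/2) = ln Y - ln 2" using Y by (simp add: ln_div)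
  moreover have "ln 2 \<le> (1::real)" using ln_le_minus_one[of 2] by simp
  ultimately show ?thesis unfolding Psi_def by simp
qed
lemma psi_small: "Y > 0 \<Longrightarrow> Psi Y \<ge> -1 - ln Y"
  unfolding Psi_def by simp

lemma deriv: "x t > 0 \<Longrightarrow> y t > 0 \<Longrightarrow>
          (x has_real_derivative (1 - y t) * x t) (at t) \<Longrightarrow>
          (y has_real_derivative (x t - y t) * y t) (at t) \<Longrightarrow>
          ((\<lambda>s. V (x s) (y s)) has_real_derivative
              (- ((x t - 1)^2 / x t) - (y t - 1)^2)) (at t)"
  unfolding V_def Psi_def
  apply (rule derivative_eq_intros | assumption | simp)+
  apply (simp add: field_simps power2_eq_square)
  done

lemma radial: "\<exists>\<delta>>0. \<forall>X Y. X > 0 \<longrightarrow> Y > 0 \<longrightarrow>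
          (X < \<delta> \<or> Y < \<delta> \<or> X + Y > 1 / \<delta>) \<longrightarrow> V X Y > M"
proof -
  define N where "N = \<bar>M\<bar> + 1"
  have N: "N \<ge> 1" "N > M" unfolding N_def by auto
  define d where "d = min (exp (-(N+1))) (1/(4*N+8))"
  have dpos: "d > 0" using N unfolding d_def by auto
  show ?thesis
  proof (intro exI[of _ d] conjI dpos allI impI)
    fix X Y :: real assume X: "X > 0" and Y: "Y > 0" and c: "X < d \<or> Y < d \<or> X + Y > 1/d"
    have VX: "V X Y \<ge> X + 1/X - 2 + Psi Y" using V_ge[OF X Y] xpart[OF X] by simp
    have p0: "Psi Y \<ge> 0" using psi_nonneg Y by simp
    have d1: "d \<le> 1/(4*N+8)" unfolding d_def by simp
    have d2: "d \<le> exp (-(N+1))" unfolding d_def by simp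
    have inv: "1/d \<ge> 4*N+8" using d1 dpos N
      by (metis divide_pos_pos le_imp_inverse_le inverse_eq_divide inverse_inverse_eq add_pos_pos mult_pos_pos zero_less_numeral order_less_le_trans zero_less_one)
    from c consider "X < d" | "Y < d" | "X + Y > 1/d" by blast
    then show "V X Y > M"
    proof cases
      case 1
      have "1/X > 1/d" using 1 X by (simp add: frac_less2)
      then show ?thesis using VX p0 X inv N by (smt (verit) divide_pos_pos)
    next
      case 2
      have "ln Y < ln d" using 2 Y by simp
      also have "ln d \<le> -(N+1)" using d2 dpos by (metis ln_exp ln_le_cancel_iff exp_gt_zero)
      finally have "Psi Y > N" using psi_small[OF Y] by simp
      moreover have "X + 1/X - 2 \<ge> 0" using xpart[OF X] by (metis zero_le_power2 divide_nonneg_pos X)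
      ultimately show ?thesis using VX N by simp
    next
      case 3
      have "X + 1/X - 2 \<ge> X - 2" using X by simp
      moreover have "X + 1/X - 2 \<ge> 0" using xpart[OF X] by (metis zero_le_power2 divide_nonneg_pos X)
      ultimately show ?thesis using VX p0 psi_big[OF Y] 3 inv N by linarith
    qed
  qed
qed

theorem theorem1:
  shows
    "(\<forall>X Y. X > 0 \<longrightarrow> Y > 0 \<longrightarrow>
        V X Y = (X - 1)^2 / X + Y - 1 - ln Y + Y / X - 1 - ln (Y / X))
     \<and> V 1 1 = 0
     \<and> (\<forall>X Y. X > 0 \<longrightarrow> Y > 0 \<longrightarrow> (X, Y) \<noteq> (1, 1) \<longrightarrow> V X Y > 0)
     \<and> (\<forall>M. \<exists>\<delta>>0. \<forall>X Y. X > 0 \<longrightarrow> Y > 0 \<longrightarrow>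
          (X < \<delta> \<or> Y < \<delta> \<or> X + Y > 1 / \<delta>) \<longrightarrow> V X Y > M)
     \<and> (\<forall>(x :: real \<Rightarrow> real) (y :: real \<Rightarrow> real) (U :: real \<Rightarrow> real) t.
          (\<forall>s. U s = y s) \<longrightarrow> x t > 0 \<longrightarrow> y t > 0 \<longrightarrow>
          (x has_real_derivative (1 - y t) * x t) (at t) \<longrightarrow>
          (y has_real_derivative (x t - U t) * y t) (at t) \<longrightarrow>
          ((\<lambda>s. V (x s) (y s)) has_real_derivative
              (- ((x t - 1)^2 / x t) - (y t - 1)^2)) (at t))
     \<and> (\<forall>X Y. X > 0 \<longrightarrow> Y > 0 \<longrightarrow> (X, Y) \<noteq> (1, 1) \<longrightarrow>
          - ((X - 1)^2 / X) - (Y - 1)^2 < (0::real))"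
proof (intro conjI allI impI)
  fix X Y :: real assume X: "X > 0" and Y: "Y > 0"
  show "V X Y = (X - 1)^2 / X + Y - 1 - ln Y + Y / X - 1 - ln (Y / X)"
    using V_alt[OF X Y] unfolding Psi_def by simp
next
  show "V 1 1 = 0" unfolding V_def Psi_def by simp
next
  fix X Y :: real assume X: "X > 0" and Y: "Y > 0" and ne: "(X, Y) \<noteq> (1, 1)"
  have a: "(X - 1)^2 / X \<ge> 0" using X by simp
  have b: "Psi Y \<ge> 0" "Psi (Y/X) \<ge> 0" using psi_nonneg X Y by auto
  show "V X Y > 0"
  proof (cases "X = 1")
    case True
    then have "Y \<noteq> 1" using ne by simp
    then show ?thesis using V_alt[OF X Y] psi_pos[OF Y] a b by simp
  next
    case False
    then have "(X - 1)^2 / X > 0" using X by simp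
    then show ?thesis using V_alt[OF X Y] b by simp
  qed
next
  fix M show "\<exists>\<delta>>0. \<forall>X Y. X > 0 \<longrightarrow> Y > 0 \<longrightarrow>
          (X < \<delta> \<or> Y < \<delta> \<or> X + Y > 1 / \<delta>) \<longrightarrow> V X Y > M" by (rule radial)
next
  fix x y U :: "real \<Rightarrow> real" and t
  assume "\<forall>s. U s = y s" "x t > 0" "y t > 0" "(x has_real_derivative (1 - y t) * x t) (at t)"
    "(y has_real_derivative (x t - U t) * y t) (at t)"
  then show "((\<lambda>s. V (x s) (y s)) has_real_derivative
              (- ((x t - 1)^2 / x t) - (y t - 1)^2)) (at t)" using deriv by simp
next
  fix X Y :: real assume X: "X > 0" and Y: "Y > 0" and ne: "(X, Y) \<noteq> (1, 1)"
  show "- ((X - 1)^2 / X) - (Y - 1)^2 < 0"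
  proof (cases "X = 1")
    case True
    then have "Y \<noteq> 1" using ne by simp
    then show ?thesis using True by simp
  next
    case False
    then have "(X - 1)^2 / X > 0" using X by simp
    then show ?thesis by (smt (verit) zero_le_power2)
  qed
qed

end
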